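(* Let $x_0\in\mathbb{R}^2$, $r_0>0$ and $0<\varepsilon_0<1/100$, and let $K$ be a relatively closed subset of $B(x_0,r_0)$ containing $x_0$. Assume that $\beta^{\rm bil}_K(x,r)\le\varepsilon_0$ for all $x\in K\cap B(x_0,r_0/2)$ and all $0<r\le r_0/2$. Then $K$ separates $B(x_0,r_0/10)$.
   Context: $B(x,r)$ is the open ball. For a set $F$ and $x\in F$: flatness $\beta_F(x,r)=r^{-1}\inf_\ell\sup_{y\in F\cap B(x,r)}\mathrm{dist}(y,\ell)$ and bilateral flatness $\beta^{\rm bil}_F(x,r)=r^{-1}\inf_\ell\max\{\sup_{y\in F\cap B(x,r)}\mathrm{dist}(y,\ell),\sup_{y\in\ell\cap B(x,r)}\mathrm{dist}(y,F)\}$, infima over lines $\ell$ through $x$. With $\nu(x,r)$ a unit normal of a line attaining the infimum in $\beta_F(x,r)$ and $D^\pm_t(x,r)=\{z\in B(x,r):\pm(z-x)\cdot\nu(x,r)>t\}$, $F$ separates $B(x,r)$ if $\beta:=\beta_F(x,r)\le1/2$ and $D^+_{\beta r}(x,r)$, $D^-_{\beta r}(x,r)$ lie in distinct connected components of $B(x,r)\setminus F$. *)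

theory Defs
  imports "HOL-Analysis.Analysis"
begin

type_synonym pt = "real ^ 2"

definition line_normal :: "pt \<Rightarrow> pt \<Rightarrow> pt set" where
  "line_normal x n = {y. (y - x) \<bullet> n = 0}"

definition lines_through :: "pt \<Rightarrow> pt set set" where
  "lines_through x = {line_normal x n | n. norm n = 1}"

definition dev :: "pt set \<Rightarrow> pt \<Rightarrow> real \<Rightarrow> pt set \<Rightarrow> real" where
  "dev F x r l = (SUP y \<in> F \<inter> ball x r. infdist y l)"

definition beta :: "pt set \<Rightarrow> pt \<Rightarrow> real \<Rightarrow> real" where
  "beta F x r = (INF l \<in> lines_through x. dev F x r l) / r"

definition beta_bil :: "pt set \<Rightarrow> pt \<Rightarrow> real \<Rightarrow> real" where
  "beta_bil F x r = (INF l \<in> lines_through x.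
      max (SUP y \<in> F \<inter> ball x r. infdist y l) (SUP y \<in> l \<inter> ball x r. infdist y F)) / r"

definition Dplus :: "pt \<Rightarrow> real \<Rightarrow> pt \<Rightarrow> real \<Rightarrow> pt set" where
  "Dplus x r n t = {z \<in> ball x r. (z - x) \<bullet> n > t}"

definition Dminus :: "pt \<Rightarrow> real \<Rightarrow> pt \<Rightarrow> real \<Rightarrow> pt set" where
  "Dminus x r n t = {z \<in> ball x r. - ((z - x) \<bullet> n) > t}"

definition separates :: "pt set \<Rightarrow> pt \<Rightarrow> real \<Rightarrow> bool" where
  "separates F x r \<longleftrightarrow> beta F x r \<le> 1/2 \<and>
     (\<forall>n. norm n = 1 \<and> dev F x r (line_normal x n) / r = beta F x r \<longrightarrow>
        (\<exists>p q. Dplus x r n (beta F x r * r) \<subseteq> connected_component_set (ball x r - F) p \<and>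
               Dminus x r n (beta F x r * r) \<subseteq> connected_component_set (ball x r - F) q \<and>
               connected_component_set (ball x r - F) p \<noteq> connected_component_set (ball x r - F) q))"

end

theory Submission
  imports Defs
begin


definition rot :: "pt \<Rightarrow> pt" where "rot n = vector [- (n$2), n$1]"

lemma inner2: "(x::pt) \<bullet> y = x$1 * y$1 + x$2 * y$2"
  by (simp add: inner_vec_def sum_2)

lemma norm2sq: "(norm (x::pt))^2 = (x$1)^2 + (x$2)^2"
  by (simp only: power2_norm_eq_inner inner2) (simp add: power2_eq_square)

lemma rot_inner: "rot n \<bullet> n = 0"
  by (simp add: rot_def inner2 vector_2)

lemma rot_norm: "norm (rot n) = norm n"
proof -
  have "(norm (rot n))^2 = (norm n)^2" by (simp add: norm2sq rot_def vector_2)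
  thus ?thesis by (simp add: power2_eq_iff_nonneg)
qed

lemma decomp:
  assumes "norm n = 1"
  shows "w = (w \<bullet> rot n) *\<^sub>R rot n + (w \<bullet> n) *\<^sub>R n"
proof -
  have h: "(n$1)^2 + (n$2)^2 = 1" using assms norm2sq[of n] by simp
  have e1: "w$1 = w$1 * ((n$1)^2 + (n$2)^2)" using h by simp
  have e2: "w$2 = w$2 * ((n$1)^2 + (n$2)^2)" using h by simp
  have c1: "((w \<bullet> rot n) *\<^sub>R rot n + (w \<bullet> n) *\<^sub>R n)$1 = w$1 * ((n$1)^2 + (n$2)^2)"
    by (simp add: rot_def inner2 power2_eq_square algebra_simps)
  have c2: "((w \<bullet> rot n) *\<^sub>R rot n + (w \<bullet> n) *\<^sub>R n)$2 = w$2 * ((n$1)^2 + (n$2)^2)"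
    by (simp add: rot_def inner2 power2_eq_square algebra_simps)
  show ?thesis unfolding vec_eq_iff forall_2 using c1 c2 e1 e2 by simp
qed

lemma decomp_norm:
  assumes "norm n = 1"
  shows "(w \<bullet> rot n)^2 + (w \<bullet> n)^2 = (norm w)^2"
proof -
  have h: "(n$1)^2 + (n$2)^2 = 1" using assms norm2sq[of n] by simp
  have "(norm w)^2 = (w$1)^2 + (w$2)^2" by (rule norm2sq)
  also have "\<dots> = ((w$1)^2 + (w$2)^2) * ((n$1)^2 + (n$2)^2)" using h by simp
  also have "\<dots> = (w \<bullet> rot n)^2 + (w \<bullet> n)^2"
    by (simp add: rot_def inner2 vector_2 power2_eq_square algebra_simps)
  finally show ?thesis by simp
qed

lemma infdist_line:
  assumes "norm n = 1"
  shows "infdist y (line_normal x n) = \<bar>(y - x) \<bullet> n\<bar>"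
proof (rule antisym)
  let ?p = "y - ((y - x) \<bullet> n) *\<^sub>R n"
  have "?p \<in> line_normal x n"
    using assms by (simp add: line_normal_def inner_diff_left algebra_simps norm_eq_1 inner_commute)
  hence "infdist y (line_normal x n) \<le> dist y ?p" by (rule infdist_le)
  also have "\<dots> = \<bar>(y - x) \<bullet> n\<bar>" using assms by (simp add: dist_norm)
  finally show "infdist y (line_normal x n) \<le> \<bar>(y - x) \<bullet> n\<bar>" .
next
  have "x \<in> line_normal x n" by (simp add: line_normal_def)
  hence ne: "line_normal x n \<noteq> {}" by blast
  show "\<bar>(y - x) \<bullet> n\<bar> \<le> infdist y (line_normal x n)"
    unfolding infdist_notempty[OF ne]
  proof (rule cINF_greatest[OF ne])
    fix z assume "z \<in> line_normal x n"
    hence "(z - x) \<bullet> n = 0" by (simp add: line_normal_def)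
    hence "(y - x) \<bullet> n = (y - z) \<bullet> n" by (simp add: inner_diff_left)
    also have "\<bar>\<dots>\<bar> \<le> norm (y - z) * norm n" by (rule Cauchy_Schwarz_ineq2)
    finally show "\<bar>(y - x) \<bullet> n\<bar> \<le> dist y z" using assms by (simp add: dist_norm)
  qed
qed

lemma infdist_lt_ex:
  assumes "infdist y A < d" "A \<noteq> {}"
  shows "\<exists>a\<in>A. dist y a < d"
  proof -
  have "bdd_below ((\<lambda>a. dist y a) ` A)" by (rule bdd_belowI[of _ 0]) auto
  thus ?thesis using assms by (simp add: infdist_notempty cINF_less_iff)
qed


lemma lines_through_ne: "lines_through x \<noteq> {}"
proof -
  have "norm (axis 1 1 :: pt) = 1" by simp
  thus ?thesis unfolding lines_through_def by blast
qed

lemma in_lines_through: "l \<in> lines_through x \<Longrightarrow> x \<in> l"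
  by (auto simp: lines_through_def line_normal_def)

lemma bdd1: "x \<in> l \<Longrightarrow> bdd_above ((\<lambda>y. infdist y l) ` (F \<inter> ball x r))"
  apply (rule bdd_aboveI[of _ r])
  apply clarsimp
  by (metis dist_commute infdist_le order.strict_implies_order order_trans mem_ball)

lemma bdd2: "x \<in> K \<Longrightarrow> bdd_above ((\<lambda>y. infdist y K) ` (l \<inter> ball x r))"
  apply (rule bdd_aboveI[of _ r])
  apply clarsimp
  by (metis dist_commute infdist_le order.strict_implies_order order_trans mem_ball)

lemma dev_nonneg: "x \<in> l \<Longrightarrow> 0 < r \<Longrightarrow> 0 \<le> dev F x r l" if "x \<in> F"
proof -
  assume "x \<in> l" "0 < r"
  hence "x \<in> F \<inter> ball x r" using that by simp
  hence "infdist x l \<le> dev F x r l" unfolding dev_def by (rule cSUP_upper[OF _ bdd1[OF \<open>x \<in> l\<close>]])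
  thus ?thesis using infdist_nonneg order_trans by blast
qed

lemma uni_bound:
  assumes "norm n = 1" "y \<in> K \<inter> ball x r"
  shows "\<bar>(y - x) \<bullet> n\<bar> \<le> dev K x r (line_normal x n)"
proof -
  have "x \<in> line_normal x n" by (simp add: line_normal_def)
  have "infdist y (line_normal x n) \<le> dev K x r (line_normal x n)"
    unfolding dev_def by (rule cSUP_upper[OF assms(2) bdd1[OF \<open>x \<in> line_normal x n\<close>]])
  thus ?thesis using infdist_line[OF assms(1)] by simp
qed

lemma beta_le_bil:
  assumes "x \<in> K" "0 < r"
  shows "beta K x r \<le> beta_bil K x r"
proof -
  have "(INF l \<in> lines_through x. dev K x r l) \<le>
        (INF l \<in> lines_through x. max (SUP y \<in> K \<inter> ball x r. infdist y l) (SUP y \<in> l \<inter> ball x r. infdist y K))"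
  proof (rule cINF_mono[OF lines_through_ne])
    show "bdd_below ((\<lambda>l. dev K x r l) ` lines_through x)"
      by (rule bdd_belowI[of _ 0]) (auto intro: dev_nonneg[OF assms(1)] in_lines_through assms(2))
    fix m assume "m \<in> lines_through x"
    thus "\<exists>n\<in>lines_through x. dev K x r n \<le> max (SUP y \<in> K \<inter> ball x r. infdist y m) (SUP y \<in> m \<inter> ball x r. infdist y K)"
      unfolding dev_def by (intro bexI[of _ m]) auto
  qed
  thus ?thesis unfolding beta_def beta_bil_def using assms(2) by (simp add: divide_right_mono)
qed

lemma bil_line:
  assumes "x \<in> K" "0 < \<rho>" "beta_bil K x \<rho> < c"
  shows "\<exists>nn. norm nn = 1 \<and> (\<forall>y\<in>K \<inter> ball x \<rho>. \<bar>(y - x) \<bullet> nn\<bar> < c * \<rho>) \<and>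
     (\<forall>w. (w - x) \<bullet> nn = 0 \<longrightarrow> w \<in> ball x \<rho> \<longrightarrow> (\<exists>k\<in>K. dist w k < c * \<rho>))"
proof -
  define G where "G l = max (SUP y \<in> K \<inter> ball x \<rho>. infdist y l) (SUP y \<in> l \<inter> ball x \<rho>. infdist y K)" for l
  have "(INF l \<in> lines_through x. G l) / \<rho> < c" using assms(3) unfolding beta_bil_def G_def .
  hence lt: "(INF l \<in> lines_through x. G l) < c * \<rho>" using assms(2) by (simp add: divide_less_eq)
  have G0: "0 \<le> G l" if "l \<in> lines_through x" for l
  proof -
    have "x \<in> l" using that by (rule in_lines_through)
    have "x \<in> K \<inter> ball x \<rho>" using assms by simp
    hence "infdist x l \<le> (SUP y \<in> K \<inter> ball x \<rho>. infdist y l)" by (rule cSUP_upper[OF _ bdd1[OF \<open>x \<in> l\<close>]])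
    thus ?thesis unfolding G_def using infdist_nonneg by (meson max.coboundedI1 order_trans)
  qed
  have "bdd_below (G ` lines_through x)" by (rule bdd_belowI[of _ 0]) (auto intro: G0)
  then obtain l where l: "l \<in> lines_through x" "G l < c * \<rho>"
    using lt by (auto simp: cINF_less_iff[OF lines_through_ne])
  then obtain nn where nn: "norm nn = 1" "l = line_normal x nn" by (auto simp: lines_through_def)
  have "x \<in> l" using l(1) by (rule in_lines_through)
  have A: "\<bar>(y - x) \<bullet> nn\<bar> < c * \<rho>" if "y \<in> K \<inter> ball x \<rho>" for y
  proof -
    have "infdist y l \<le> (SUP y \<in> K \<inter> ball x \<rho>. infdist y l)" by (rule cSUP_upper[OF that bdd1[OF \<open>x \<in> l\<close>]])
    also have "\<dots> \<le> G l" unfolding G_def by simp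
    finally show ?thesis using l(2) infdist_line[OF nn(1)] nn(2) by simp
  qed
  have B: "\<exists>k\<in>K. dist w k < c * \<rho>" if "(w - x) \<bullet> nn = 0" "w \<in> ball x \<rho>" for w
  proof -
    have "w \<in> l \<inter> ball x \<rho>" using that nn(2) by (simp add: line_normal_def)
    hence "infdist w K \<le> (SUP y \<in> l \<inter> ball x \<rho>. infdist y K)" by (rule cSUP_upper[OF _ bdd2[OF assms(1)]])
    also have "\<dots> \<le> G l" unfolding G_def by simp
    finally have "infdist w K < c * \<rho>" using l(2) by simp
    thus ?thesis using infdist_lt_ex assms(1) by blast
  qed
  show ?thesis using nn(1) A B by blast
qed


fun chain :: "real \<Rightarrow> pt list \<Rightarrow> bool" where
  "chain t (a # b # xs) = (dist a b \<le> t \<and> chain t (b # xs))"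
| "chain t _ = True"

fun polyp :: "pt list \<Rightarrow> real \<Rightarrow> pt" where
  "polyp [] = linepath 0 0"
| "polyp [a] = linepath a a"
| "polyp (a # b # xs) = linepath a b +++ polyp (b # xs)"

lemma polyp_start: "pathstart (polyp (a # xs)) = a"
  by (cases xs) auto

lemma polyp_finish: "xs \<noteq> [] \<Longrightarrow> pathfinish (polyp xs) = last xs"
  by (induction xs rule: polyp.induct) auto

lemma polyp_path: "path (polyp xs)"
  by (induction xs rule: polyp.induct) (auto simp: polyp_start path_const)

lemma polyp_image: "convex S \<Longrightarrow> set xs \<subseteq> S \<Longrightarrow> xs \<noteq> [] \<Longrightarrow> path_image (polyp xs) \<subseteq> S"
proof (induction xs rule: polyp.induct)
  case (3 a b xs)
  have "closed_segment a b \<subseteq> S" using 3 by (simp add: closed_segment_subset)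
  thus ?case using 3 by (simp add: path_image_join polyp_start)
qed auto

lemma polyp_near: "chain t xs \<Longrightarrow> 0 \<le> t \<Longrightarrow> z \<in> path_image (polyp xs) \<Longrightarrow> xs \<noteq> [] \<Longrightarrow> \<exists>a\<in>set xs. dist z a \<le> t"
proof (induction xs rule: polyp.induct)
  case (3 a b xs)
  show ?case
  proof (cases "z \<in> closed_segment a b")
    case True
    hence "dist z a \<le> dist a b" using dist_in_closed_segment by blast
    thus ?thesis using 3 by auto
  next
    case False
    hence "z \<in> path_image (polyp (b # xs))" using 3(4) by (simp add: path_image_join polyp_start)
    thus ?thesis using 3 by auto
  qed
qed auto

lemma refine:
  assumes ins: "\<And>a b. a \<in> P \<Longrightarrow> b \<in> P \<Longrightarrow> dist a b \<le> t \<Longrightarrow> \<exists>k\<in>Q. dist a k \<le> t' \<and> dist k b \<le> t'"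
    and PQ: "P \<subseteq> Q"
  shows "chain t xs \<Longrightarrow> set xs \<subseteq> P \<Longrightarrow> xs \<noteq> [] \<Longrightarrow>
    \<exists>ys. ys \<noteq> [] \<and> hd ys = hd xs \<and> last ys = last xs \<and> chain t' ys \<and> set ys \<subseteq> Q"
proof (induction xs)
  case Nil
  then show ?case by simp
next
  case (Cons a xs)
  show ?case
  proof (cases xs)
    case Nil
    then show ?thesis using Cons PQ by (intro exI[of _ "[a]"]) auto
  next
    case (Cons b zs)
    have ch: "dist a b \<le> t" "chain t xs" using Cons.prems(1) Cons by auto
    obtain ys where ys: "ys \<noteq> []" "hd ys = b" "last ys = last xs" "chain t' ys" "set ys \<subseteq> Q"
      using Cons.IH[OF ch(2)] Cons.prems Cons by auto
    obtain k where k: "k \<in> Q" "dist a k \<le> t'" "dist k b \<le> t'"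
      using ins[of a b] ch(1) Cons.prems Cons by auto
    obtain c ws where cws: "ys = c # ws" using ys(1) by (cases ys) auto
    have "chain t' (a # k # ys)" using ys k cws by simp
    moreover have "set (a # k # ys) \<subseteq> Q" using ys k Cons.prems PQ by auto
    ultimately show ?thesis using ys Cons by (intro exI[of _ "a # k # ys"]) auto
  qed
qed


lemma mid_dist: fixes x0 a b :: pt shows "dist x0 ((1/2) *\<^sub>R (a + b)) \<le> (dist x0 a + dist x0 b) / 2"
proof -
    have e: "x0 - (1/2) *\<^sub>R (a + b) = (1/2) *\<^sub>R ((x0 - a) + (x0 - b))" by (simp add: vec_eq_iff field_simps)
    have "norm (x0 - (1/2) *\<^sub>R (a + b)) = (1/2) * norm ((x0 - a) + (x0 - b))"
      unfolding e by (simp only: norm_scaleR)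
    moreover have "norm ((x0 - a) + (x0 - b)) \<le> norm (x0 - a) + norm (x0 - b)"
      by (rule norm_triangle_ineq)
    ultimately show ?thesis by (simp add: dist_norm)
qed

lemma insert_pt:
  assumes flat: "\<And>x \<rho>. x \<in> K \<Longrightarrow> x \<in> ball x0 h \<Longrightarrow> 0 < \<rho> \<Longrightarrow> \<rho> \<le> h \<Longrightarrow> beta_bil K x \<rho> < 1/100"
    and aK: "a \<in> K" and bK: "b \<in> K" and aB: "a \<in> ball x0 (R - t/8)" and bB: "b \<in> ball x0 (R - t/8)"
    and ab: "dist a b \<le> t" and t0: "0 < t" and th: "2 * t \<le> h" and Rh: "R \<le> h"
  shows "\<exists>k\<in>K. dist a k \<le> 3*t/5 \<and> dist k b \<le> 3*t/5 \<and> k \<in> ball x0 (R - (3*t/5)/8)"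
proof -
  have "a \<in> ball x0 h" using aB Rh t0 by auto
  then obtain nn where nn: "norm nn = 1"
    and A: "\<forall>y\<in>K \<inter> ball a (2*t). \<bar>(y - a) \<bullet> nn\<bar> < 1/100 * (2*t)"
    and B: "\<forall>w. (w - a) \<bullet> nn = 0 \<longrightarrow> w \<in> ball a (2*t) \<longrightarrow> (\<exists>k\<in>K. dist w k < 1/100 * (2*t))"
    using bil_line[OF aK, of "2*t" "1/100"] flat[OF aK _ _ th] t0 by auto
  have nn1: "nn \<bullet> nn = 1" using nn by (simp add: norm_eq_1)
  have "b \<in> K \<inter> ball a (2*t)" using bK ab t0 by auto
  hence bn: "\<bar>(b - a) \<bullet> nn\<bar> < t/50" using A by auto
  define m where "m = (1/2) *\<^sub>R (a + b)"
  have ma: "m - a = (1/2) *\<^sub>R (b - a)" unfolding m_def by (simp add: vec_eq_iff field_simps)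
  have mb: "m - b = (1/2) *\<^sub>R (a - b)" unfolding m_def by (simp add: vec_eq_iff field_simps)
  have mn: "\<bar>(m - a) \<bullet> nn\<bar> < t/100" using bn unfolding ma by simp
  have nma: "norm (m - a) \<le> t/2" using ab unfolding ma by (simp add: dist_norm norm_minus_commute)
  have nmb: "norm (m - b) \<le> t/2" using ab unfolding mb by (simp add: dist_norm)
  define m' where "m' = m - ((m - a) \<bullet> nn) *\<^sub>R nn"
  have m'1: "(m' - a) \<bullet> nn = 0" unfolding m'_def using nn1 by (simp add: algebra_simps inner_diff_left)
  have mm': "norm (m - m') < t/100" unfolding m'_def using mn nn by simp
  have "m' - a = (m - a) - (m - m')" by simp
  hence "norm (m' - a) \<le> norm (m - a) + norm (m - m')"
    using norm_triangle_ineq4[of "m - a" "m - m'"] by simp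
  hence "m' \<in> ball a (2*t)" using nma mm' t0 by (simp add: dist_norm norm_minus_commute)
  then obtain k where k: "k \<in> K" "dist m' k < t/50" using B m'1 by auto
  have mk: "dist m k < 3*t/100"
    using dist_triangle[of m k m'] k(2) mm' by (simp add: dist_norm)
  have dam: "dist a m \<le> t/2" using nma by (simp add: dist_norm norm_minus_commute)
  have dbm: "dist b m \<le> t/2" using nmb by (simp add: dist_norm norm_minus_commute)
  have "dist a k \<le> 3*t/5" using dist_triangle[of a k m] mk dam t0 by linarith
  moreover have "dist k b \<le> 3*t/5" using dist_triangle[of b k m] mk dbm t0 by (simp add: dist_commute)
  moreover have "dist x0 m < R - t/8"
    using mid_dist[of x0 a b] aB bB unfolding m_def by simp
  hence "k \<in> ball x0 (R - (3*t/5)/8)" using dist_triangle[of x0 k m] mk t0 by simp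
  ultimately show ?thesis using k(1) by blast
qed


lemma chain_exists:
  assumes flat: "\<And>x \<rho>. x \<in> K \<Longrightarrow> x \<in> ball x0 h \<Longrightarrow> 0 < \<rho> \<Longrightarrow> \<rho> \<le> h \<Longrightarrow> beta_bil K x \<rho> < 1/100"
    and t0: "0 < t0" "2 * t0 \<le> h" and Rh: "R \<le> h"
    and xs: "xs \<noteq> []" "chain t0 xs" "set xs \<subseteq> K \<inter> ball x0 (R - t0/8)"
  shows "\<exists>ys. ys \<noteq> [] \<and> hd ys = hd xs \<and> last ys = last xs \<and> chain (t0 * (3/5)^N) ys \<and>
           set ys \<subseteq> K \<inter> ball x0 (R - t0 * (3/5)^N / 8)"
proof (induction N)
  case 0
  then show ?case using xs by (intro exI[of _ xs]) auto
next
  case (Suc N)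
  define t where "t = t0 * (3/5)^N"
  have tpos: "0 < t" unfolding t_def using t0 by simp
  have "(3/5::real)^N \<le> 1" by (simp add: power_le_one)
  hence tle: "t \<le> t0" unfolding t_def using t0 by (simp add: mult_left_le)
  obtain ys where ys: "ys \<noteq> []" "hd ys = hd xs" "last ys = last xs" "chain t ys" "set ys \<subseteq> K \<inter> ball x0 (R - t/8)"
    using Suc unfolding t_def by blast
  have ins: "\<exists>k\<in>K \<inter> ball x0 (R - (3*t/5)/8). dist a k \<le> 3*t/5 \<and> dist k b \<le> 3*t/5"
    if "a \<in> K \<inter> ball x0 (R - t/8)" "b \<in> K \<inter> ball x0 (R - t/8)" "dist a b \<le> t" for a b
    using insert_pt[where K=K and h=h and ?x0.0=x0 and a=a and b=b and R=R and t=t, OF flat] that tpos tle t0 Rh by auto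
  have PQ: "K \<inter> ball x0 (R - t/8) \<subseteq> K \<inter> ball x0 (R - (3*t/5)/8)" using tpos by auto
  obtain zs where "zs \<noteq> [] \<and> hd zs = hd ys \<and> last zs = last ys \<and> chain (3*t/5) zs \<and> set zs \<subseteq> K \<inter> ball x0 (R - (3*t/5)/8)"
    using refine[OF ins PQ, OF _ _ _ ys(4) ys(5) ys(1)] by blast
  moreover have "3*t/5 = t0 * (3/5)^Suc N" unfolding t_def by simp
  ultimately show ?case using ys by (metis (no_types, lifting))
qed

definition Phi :: "pt \<Rightarrow> pt \<Rightarrow> pt \<Rightarrow> pt \<Rightarrow> pt" where
  "Phi x0 e n z = ((z - x0) \<bullet> e) *\<^sub>R axis 1 1 + ((z - x0) \<bullet> n) *\<^sub>R axis 2 1"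

lemma Phi_1: "Phi x0 e n z $ 1 = (z - x0) \<bullet> e" and Phi_2: "Phi x0 e n z $ 2 = (z - x0) \<bullet> n"
  by (simp_all add: Phi_def axis_def)

lemma Phi_cont: "continuous_on S (Phi x0 e n)"
  unfolding Phi_def by (intro continuous_intros)

lemma Phi_inj:
  assumes "norm n = 1" "Phi x0 (rot n) n z1 = Phi x0 (rot n) n z2"
  shows "z1 = z2"
proof -
  have "(z1 - x0) \<bullet> rot n = (z2 - x0) \<bullet> rot n" "(z1 - x0) \<bullet> n = (z2 - x0) \<bullet> n"
    using assms(2) by (metis Phi_1, metis Phi_2)
  hence "z1 - x0 = z2 - x0" using decomp[OF assms(1), of "z1 - x0"] decomp[OF assms(1), of "z2 - x0"] by simp
  thus ?thesis by simp
qed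

lemma seg_aff:
  assumes "z \<in> closed_segment a b"
  shows "\<exists>l. 0 \<le> l \<and> l \<le> 1 \<and> (\<forall>w. (z - x0) \<bullet> w = (1 - l) * ((a - x0) \<bullet> w) + l * ((b - x0) \<bullet> w))"
proof -
  obtain l where l: "0 \<le> l" "l \<le> 1" "z = (1 - l) *\<^sub>R a + l *\<^sub>R b"
    using assms by (auto simp: closed_segment_def)
  have "(z - x0) \<bullet> w = (1 - l) * ((a - x0) \<bullet> w) + l * ((b - x0) \<bullet> w)" for w
    unfolding l(3) by (simp add: inner_diff_left inner_add_left algebra_simps)
  thus ?thesis using l by blast
qed



lemma cs_n: "norm n = 1 \<Longrightarrow> \<bar>x \<bullet> n\<bar> \<le> norm (x::pt)"
  using Cauchy_Schwarz_ineq2[of x n] by simp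

lemma strip_lemma:
  assumes n1: "norm n = 1" and nr1: "norm nr = 1" and r0: "r > 0"
    and vK: "\<forall>y\<in>K \<inter> ball x0 r. \<bar>(y - x0) \<bullet> n\<bar> < r/100"
    and A: "\<forall>y\<in>K \<inter> ball x0 (3*r). \<bar>(y - x0) \<bullet> nr\<bar> < 1/100 * (3*r)"
    and B: "\<forall>w. (w - x0) \<bullet> nr = 0 \<longrightarrow> w \<in> ball x0 (3*r) \<longrightarrow> (\<exists>k\<in>K. dist w k < 1/100 * (3*r))"
  shows "\<forall>z\<in>K \<inter> ball x0 (3*r). \<bar>(z - x0) \<bullet> n\<bar> < r/2"
    and "\<exists>A B. A \<in> K \<and> B \<in> K \<and> dist x0 A < 8*r/5 \<and> dist x0 B < 8*r/5 \<and>
           (A - x0) \<bullet> rot n < - r \<and> (B - x0) \<bullet> rot n > r"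
proof -
  define er where "er = rot nr"
  have er1: "norm er = 1" unfolding er_def using nr1 by (simp add: rot_norm)
  have ern: "er \<bullet> nr = 0" unfolding er_def by (rule rot_inner)
  define w0 where "w0 = x0 + (9*r/10) *\<^sub>R er"
  have "(w0 - x0) \<bullet> nr = 0" unfolding w0_def using ern by simp
  moreover have "w0 \<in> ball x0 (3*r)" unfolding w0_def using er1 r0 by (simp add: dist_norm)
  ultimately obtain k0 where k0: "k0 \<in> K" "dist w0 k0 < 3*r/100" using B by force
  have "dist x0 k0 \<le> dist x0 w0 + dist w0 k0" by (rule dist_triangle)
  moreover have "dist x0 w0 = 9*r/10" unfolding w0_def using er1 r0 by (simp add: dist_norm)
  ultimately have "k0 \<in> ball x0 r" using k0 r0 by simp
  hence vk0: "\<bar>(k0 - x0) \<bullet> n\<bar> < r/100" using vK k0 by blast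
  have "\<bar>(w0 - k0) \<bullet> n\<bar> \<le> norm (w0 - k0)" by (rule cs_n[OF n1])
  hence ew: "\<bar>(w0 - k0) \<bullet> n\<bar> < 3*r/100" using k0 by (simp add: dist_norm)
  have "(w0 - x0) \<bullet> n = (k0 - x0) \<bullet> n + (w0 - k0) \<bullet> n" by (simp add: inner_diff_left)
  moreover have "(w0 - x0) \<bullet> n = (9*r/10) * (er \<bullet> n)" unfolding w0_def by simp
  ultimately have "\<bar>(9*r/10) * (er \<bullet> n)\<bar> < 4*r/100" using vk0 ew by linarith
  hence "(9*r/10) * \<bar>er \<bullet> n\<bar> < (9*r/10) * (2/45)" using r0 by (simp add: abs_mult)
  hence tilt: "\<bar>er \<bullet> n\<bar> < 2/45" using r0 by (simp add: mult_less_cancel_left_pos)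
  show "\<forall>z\<in>K \<inter> ball x0 (3*r). \<bar>(z - x0) \<bullet> n\<bar> < r/2"
  proof
    fix z assume z: "z \<in> K \<inter> ball x0 (3*r)"
    define w where "w = z - x0"
    have nw: "norm w < 3*r" using z unfolding w_def by (simp add: dist_norm norm_minus_commute)
    have wnr: "\<bar>w \<bullet> nr\<bar> < 3*r/100" using A z unfolding w_def by auto
    have "w \<bullet> n = ((w \<bullet> er) *\<^sub>R er + (w \<bullet> nr) *\<^sub>R nr) \<bullet> n"
      using decomp[OF nr1, of w] unfolding er_def by simp
    hence wn: "w \<bullet> n = (w \<bullet> er) * (er \<bullet> n) + (w \<bullet> nr) * (nr \<bullet> n)"
      by (simp add: inner_add_left)
    have "\<bar>w \<bullet> er\<bar> \<le> norm w" by (rule cs_n[OF er1])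
    hence "\<bar>w \<bullet> er\<bar> * \<bar>er \<bullet> n\<bar> \<le> (3*r) * (2/45)"
      using nw tilt by (intro mult_mono) auto
    hence p1: "\<bar>(w \<bullet> er) * (er \<bullet> n)\<bar> \<le> (3*r) * (2/45)" by (simp add: abs_mult)
    have "\<bar>nr \<bullet> n\<bar> \<le> 1" using cs_n[OF n1, of nr] nr1 by simp
    hence "\<bar>w \<bullet> nr\<bar> * \<bar>nr \<bullet> n\<bar> \<le> (3*r/100) * 1"
      using wnr by (intro mult_mono) auto
    hence p2: "\<bar>(w \<bullet> nr) * (nr \<bullet> n)\<bar> \<le> 3*r/100" by (simp add: abs_mult)
    have "\<bar>w \<bullet> n\<bar> \<le> (3*r) * (2/45) + 3*r/100" unfolding wn using p1 p2 by linarith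
    thus "\<bar>(z - x0) \<bullet> n\<bar> < r/2" unfolding w_def using r0 by linarith
  qed
  define c where "c = er \<bullet> rot n"
  have "c^2 + (er \<bullet> n)^2 = 1" using decomp_norm[OF n1, of er] er1 unfolding c_def by simp
  moreover have "\<bar>er \<bullet> n\<bar>^2 \<le> (2/45)^2" using tilt by (intro power_mono) auto
  ultimately have "(9/10)^2 \<le> \<bar>c\<bar>^2" by (simp add: power2_eq_square)
  hence c9: "9/10 \<le> \<bar>c\<bar>" by (rule power2_le_imp_le) simp
  define wA where "wA = x0 - (3*r/2) *\<^sub>R er"
  define wB where "wB = x0 + (3*r/2) *\<^sub>R er"
  have "(wA - x0) \<bullet> nr = 0" unfolding wA_def using ern by simp
  moreover have "wA \<in> ball x0 (3*r)" unfolding wA_def using er1 r0 by (simp add: dist_norm)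
  ultimately obtain kA where kA: "kA \<in> K" "dist wA kA < 3*r/100" using B by force
  have "(wB - x0) \<bullet> nr = 0" unfolding wB_def using ern by simp
  moreover have "wB \<in> ball x0 (3*r)" unfolding wB_def using er1 r0 by (simp add: dist_norm)
  ultimately obtain kB where kB: "kB \<in> K" "dist wB kB < 3*r/100" using B by force
  have "dist x0 kA \<le> dist x0 wA + dist wA kA" by (rule dist_triangle)
  moreover have "dist x0 wA = 3*r/2" unfolding wA_def using er1 r0 by (simp add: dist_norm)
  ultimately have dA: "dist x0 kA < 8*r/5" using kA r0 by simp
  have "dist x0 kB \<le> dist x0 wB + dist wB kB" by (rule dist_triangle)
  moreover have "dist x0 wB = 3*r/2" unfolding wB_def using er1 r0 by (simp add: dist_norm)
  ultimately have dB: "dist x0 kB < 8*r/5" using kB r0 by simp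
  have n1': "norm (rot n) = 1" using n1 by (simp add: rot_norm)
  have "\<bar>(kA - wA) \<bullet> rot n\<bar> \<le> norm (kA - wA)" by (rule cs_n[OF n1'])
  hence eA: "\<bar>(kA - wA) \<bullet> rot n\<bar> < 3*r/100" using kA by (simp add: dist_norm norm_minus_commute)
  have "\<bar>(kB - wB) \<bullet> rot n\<bar> \<le> norm (kB - wB)" by (rule cs_n[OF n1'])
  hence eB: "\<bar>(kB - wB) \<bullet> rot n\<bar> < 3*r/100" using kB by (simp add: dist_norm norm_minus_commute)
  have uA: "(kA - x0) \<bullet> rot n = - (3*r/2) * c + (kA - wA) \<bullet> rot n"
    unfolding wA_def c_def by (simp add: inner_diff_left)
  have uB: "(kB - x0) \<bullet> rot n = (3*r/2) * c + (kB - wB) \<bullet> rot n"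
    unfolding wB_def c_def by (simp add: inner_diff_left algebra_simps)
  have rc: "(3*r/2) * (9/10) \<le> (3*r/2) * \<bar>c\<bar>" using c9 r0 by (intro mult_left_mono) auto
  have eA': "- (3*r/100) < (kA - wA) \<bullet> rot n" "(kA - wA) \<bullet> rot n < 3*r/100" using eA by (simp_all add: abs_less_iff)
  have eB': "- (3*r/100) < (kB - wB) \<bullet> rot n" "(kB - wB) \<bullet> rot n < 3*r/100" using eB by (simp_all add: abs_less_iff)
  show "\<exists>A B. A \<in> K \<and> B \<in> K \<and> dist x0 A < 8*r/5 \<and> dist x0 B < 8*r/5 \<and>
           (A - x0) \<bullet> rot n < - r \<and> (B - x0) \<bullet> rot n > r"
  proof (cases "c \<ge> 0")
    case True
    hence rc': "(3*r/2) * (9/10) \<le> (3*r/2) * c" using rc by simp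
    have "(kA - x0) \<bullet> rot n < - r" "(kB - x0) \<bullet> rot n > r" using uA uB eA' eB' rc' r0 by linarith+
    thus ?thesis using kA kB dA dB by blast
  next
    case False
    hence rc': "(3*r/2) * (9/10) \<le> - ((3*r/2) * c)" using rc by simp
    have "(kB - x0) \<bullet> rot n < - r" "(kA - x0) \<bullet> rot n > r" using uA uB eA' eB' rc' r0 by linarith+
    thus ?thesis using kA kB dA dB by blast
  qed
qed


lemma conv_le: "0 \<le> l \<Longrightarrow> l \<le> 1 \<Longrightarrow> a \<le> M \<Longrightarrow> b \<le> M \<Longrightarrow> (1 - l) * a + l * b \<le> (M::real)"
proof -
  assume h: "0 \<le> l" "l \<le> 1" "a \<le> M" "b \<le> M"
  have "(1 - l) * a \<le> (1 - l) * M" using h by (intro mult_left_mono) auto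
  moreover have "l * b \<le> l * M" using h by (intro mult_left_mono) auto
  ultimately show ?thesis by (simp add: algebra_simps)
qed

lemma conv_ge: "0 \<le> l \<Longrightarrow> l \<le> 1 \<Longrightarrow> M \<le> a \<Longrightarrow> M \<le> b \<Longrightarrow> (M::real) \<le> (1 - l) * a + l * b"
  using conv_le[of l "-a" "-M" "-b"] by simp

lemma conv_eq: "(1 - l) * a + l * a = (a::real)"
  by (simp add: algebra_simps)

lemma no_path:
  assumes flat: "\<And>x \<rho>. x \<in> K \<Longrightarrow> x \<in> ball x0 (5*r) \<Longrightarrow> 0 < \<rho> \<Longrightarrow> \<rho> \<le> 5*r \<Longrightarrow> beta_bil K x \<rho> < 1/100"
    and r0: "r > 0" and n1: "norm n = 1" and C: "closed C" "K = ball x0 (10*r) \<inter> C" and x0K: "x0 \<in> K"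
    and vK: "\<forall>y\<in>K \<inter> ball x0 r. \<bar>(y - x0) \<bullet> n\<bar> < r/100"
    and gam: "path \<gamma>" "path_image \<gamma> \<subseteq> ball x0 r - K"
      "pathstart \<gamma> = x0 + (r/2) *\<^sub>R n" "pathfinish \<gamma> = x0 - (r/2) *\<^sub>R n"
  shows False
proof -
  define e where "e = rot n"
  have e1: "norm e = 1" unfolding e_def using n1 by (simp add: rot_norm)
  have ee: "e \<bullet> e = 1" using e1 by (simp add: norm_eq_1)
  have nn: "n \<bullet> n = 1" using n1 by (simp add: norm_eq_1)
  have en: "e \<bullet> n = 0" unfolding e_def by (rule rot_inner)
  have ne: "n \<bullet> e = 0" using en by (simp add: inner_commute)
  define u where "u z = (z - x0) \<bullet> e" for z
  define v where "v z = (z - x0) \<bullet> n" for z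
  have ub: "\<bar>u z\<bar> \<le> dist x0 z" for z unfolding u_def using cs_n[OF e1, of "z - x0"] by (simp add: dist_norm norm_minus_commute)
  have vb: "\<bar>v z\<bar> \<le> dist x0 z" for z unfolding v_def using cs_n[OF n1, of "z - x0"] by (simp add: dist_norm norm_minus_commute)
  have x05: "x0 \<in> ball x0 (5*r)" using r0 by simp
  obtain nr where nr: "norm nr = 1"
    and A: "\<forall>y\<in>K \<inter> ball x0 (3*r). \<bar>(y - x0) \<bullet> nr\<bar> < 1/100 * (3*r)"
    and B: "\<forall>w. (w - x0) \<bullet> nr = 0 \<longrightarrow> w \<in> ball x0 (3*r) \<longrightarrow> (\<exists>k\<in>K. dist w k < 1/100 * (3*r))"
    using bil_line[OF x0K, of "3*r" "1/100"] flat[OF x0K x05, of "3*r"] r0 by auto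
  note SL = strip_lemma[OF n1 nr r0 vK A B]
  have strip: "\<forall>z\<in>K \<inter> ball x0 (3*r). \<bar>v z\<bar> < r/2" using SL(1) unfolding v_def .
  obtain Aa Bb where AB: "Aa \<in> K" "Bb \<in> K" "dist x0 Aa < 8*r/5" "dist x0 Bb < 8*r/5" "u Aa < - r" "u Bb > r"
    using SL(2) unfolding u_def e_def by blast
  define K2 where "K2 = cball x0 (2*r) \<inter> C"
  have "closed K2" unfolding K2_def using C by (simp add: closed_Int)
  moreover have "compact (path_image \<gamma>)" using gam(1) by auto
  moreover have "path_image \<gamma> \<inter> K2 = {}"
  proof -
    { fix z assume z: "z \<in> path_image \<gamma>" "z \<in> K2"
      hence "z \<in> ball x0 r" "z \<notin> K" using gam(2) by auto
      moreover have "z \<in> C" using z(2) unfolding K2_def by simp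
      ultimately have False using C(2) r0 by auto }
    thus ?thesis by blast
  qed
  ultimately obtain \<delta> where \<delta>: "\<delta> > 0" "\<forall>x\<in>path_image \<gamma>. \<forall>y\<in>K2. \<delta> \<le> dist x y"
    using separate_compact_closed by metis
  define t0 where "t0 = 8*r/5"
  have t0p: "0 < t0" unfolding t0_def using r0 by simp
  obtain N where N: "(3/5::real)^N < \<delta> / t0" using real_arch_pow_inv[of "\<delta>/t0" "3/5"] \<delta> t0p by auto
  define tN where "tN = t0 * (3/5)^N"
  have tN: "tN < \<delta>" "0 \<le> tN" unfolding tN_def using N t0p by (simp_all add: field_simps)
  have xsK: "set [Aa, x0, Bb] \<subseteq> K \<inter> ball x0 (9*r/5 - t0/8)" using AB x0K r0 unfolding t0_def by auto
  have xsc: "chain t0 [Aa, x0, Bb]" using AB unfolding t0_def by (simp add: dist_commute)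
  obtain ys where ys: "ys \<noteq> []" "hd ys = Aa" "last ys = Bb" "chain tN ys"
      "set ys \<subseteq> K \<inter> ball x0 (9*r/5 - tN/8)"
    using chain_exists[where K=K and h="5*r" and ?x0.0=x0 and ?t0.0=t0 and R="9*r/5" and xs="[Aa,x0,Bb]" and N=N,
        OF flat t0p _ _ _ xsc xsK] r0 unfolding tN_def t0_def by auto
  have ysK: "set ys \<subseteq> K \<inter> ball x0 (9*r/5)" using ys(5) tN by auto
  have ysK2: "set ys \<subseteq> K2" using ysK C r0 unfolding K2_def by auto
  define S where "S = ball x0 (9*r/5) \<inter> {z. n \<bullet> z < r/2 + n \<bullet> x0} \<inter> {z. n \<bullet> z > n \<bullet> x0 - r/2}"
  have Sc: "convex S" unfolding S_def by (intro convex_Int convex_ball convex_halfspace_lt convex_halfspace_gt)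
  have Sm: "z \<in> S \<longleftrightarrow> dist x0 z < 9*r/5 \<and> \<bar>v z\<bar> < r/2" for z
  proof -
    have vz: "v z = n \<bullet> z - n \<bullet> x0" unfolding v_def by (simp add: inner_diff_left inner_diff_right inner_commute)
    have i: "\<bar>v z\<bar> < r/2 \<longleftrightarrow> (n \<bullet> z < r/2 + n \<bullet> x0 \<and> n \<bullet> x0 - r/2 < n \<bullet> z)"
      unfolding vz abs_less_iff by (intro iffI conjI; (elim conjE)?; linarith)
    show ?thesis unfolding S_def i by simp
  qed
  have ysS: "set ys \<subseteq> S"
  proof
    fix y assume "y \<in> set ys"
    hence "y \<in> K \<inter> ball x0 (9*r/5)" using ysK by auto
    moreover hence "y \<in> K \<inter> ball x0 (3*r)" using r0 by auto
    ultimately show "y \<in> S" using strip Sm by auto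
  qed
  define P where "P = polyp ys"
  obtain y1 ys' where ys1: "ys = y1 # ys'" using ys(1) by (cases ys) auto
  have Pp: "path P" unfolding P_def by (rule polyp_path)
  have Ps: "pathstart P = Aa" unfolding P_def using ys(2) ys1 by (simp add: polyp_start)
  have Pf: "pathfinish P = Bb" unfolding P_def using ys(3) ys(1) by (simp add: polyp_finish)
  have PS: "path_image P \<subseteq> S" unfolding P_def using polyp_image[OF Sc ysS ys(1)] .
  have Pnear: "\<exists>a\<in>set ys. dist z a \<le> tN" if "z \<in> path_image P" for z
    using polyp_near[OF ys(4) tN(2) _ ys(1)] that unfolding P_def by blast
  define A' where "A' = Aa - (3*r + u Aa) *\<^sub>R e"
  define B' where "B' = Bb + (3*r - u Bb) *\<^sub>R e"
  have uA': "u A' = - 3*r" "v A' = v Aa" unfolding A'_def u_def v_def using ee en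
    by (simp_all add: inner_diff_left algebra_simps)
  have uB': "u B' = 3*r" "v B' = v Bb" unfolding B'_def u_def v_def using ee en
    by (simp_all add: inner_diff_left algebra_simps)
  define p where "p = x0 + (r/2) *\<^sub>R n"
  define q where "q = x0 - (r/2) *\<^sub>R n"
  define g0 where "g0 = x0 - r *\<^sub>R n"
  define g1 where "g1 = x0 + r *\<^sub>R n"
  have uvp: "u p = 0" "v p = r/2" "u q = 0" "v q = - r/2" "u g0 = 0" "v g0 = - r" "u g1 = 0" "v g1 = r"
    unfolding p_def q_def g0_def g1_def u_def v_def using ne nn by simp_all
  define f where "f = linepath A' Aa +++ P +++ linepath Bb B'"
  define g where "g = linepath g0 q +++ reversepath \<gamma> +++ linepath p g1"
  have fp: "path f" unfolding f_def using Pp Ps Pf by simp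
  have gp: "path g" unfolding g_def using gam by (simp add: p_def q_def)
  have fi: "path_image f = closed_segment A' Aa \<union> path_image P \<union> closed_segment Bb B'"
    unfolding f_def using Ps Pf by (simp add: path_image_join Un_assoc)
  have gi: "path_image g = closed_segment g0 q \<union> path_image \<gamma> \<union> closed_segment p g1"
    unfolding g_def using gam by (simp add: path_image_join Un_assoc p_def q_def)
  have fs: "pathstart f = A'" "pathfinish f = B'" unfolding f_def by simp_all
  have gs: "pathstart g = g0" "pathfinish g = g1" unfolding g_def by simp_all
  have vA: "\<bar>v Aa\<bar> < r/2" "\<bar>v Bb\<bar> < r/2" using strip AB r0 by auto
  have uAb: "- 3*r \<le> u Aa" "u Bb \<le> 3*r" using ub[of Aa] ub[of Bb] AB(3,4) r0 by (simp_all add: abs_le_iff)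
  have F1: "u z < - r \<and> - 3*r \<le> u z \<and> \<bar>v z\<bar> < r/2" if zs: "z \<in> closed_segment A' Aa" for z
  proof -
    obtain l where l: "0 \<le> l" "l \<le> 1" "\<forall>w. (z - x0) \<bullet> w = (1 - l) * ((A' - x0) \<bullet> w) + l * ((Aa - x0) \<bullet> w)"
      using seg_aff[OF zs] by blast
    have "u z = (1 - l) * u A' + l * u Aa" "v z = (1 - l) * v A' + l * v Aa" unfolding u_def v_def using l(3) by auto
    moreover have "(1 - l) * u A' + l * u Aa \<le> max (-3*r) (u Aa)"
      using conv_le[OF l(1,2), of "u A'" "max (-3*r) (u Aa)" "u Aa"] by (simp add: uA')
    moreover have "- 3*r \<le> (1 - l) * u A' + l * u Aa"
      using conv_ge[OF l(1,2), of "-3*r" "u A'" "u Aa"] uAb by (simp add: uA')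
    ultimately show ?thesis using AB(5) r0 vA uA' by (simp add: conv_eq)
  qed
  have F2: "u z > r \<and> u z \<le> 3*r \<and> \<bar>v z\<bar> < r/2" if zs: "z \<in> closed_segment Bb B'" for z
  proof -
    obtain l where l: "0 \<le> l" "l \<le> 1" "\<forall>w. (z - x0) \<bullet> w = (1 - l) * ((Bb - x0) \<bullet> w) + l * ((B' - x0) \<bullet> w)"
      using seg_aff[OF zs] by blast
    have "u z = (1 - l) * u Bb + l * u B'" "v z = (1 - l) * v Bb + l * v B'" unfolding u_def v_def using l(3) by auto
    moreover have "min (3*r) (u Bb) \<le> (1 - l) * u Bb + l * u B'"
      using conv_ge[OF l(1,2), of "min (3*r) (u Bb)" "u Bb" "u B'"] by (simp add: uB')
    moreover have "(1 - l) * u Bb + l * u B' \<le> 3*r"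
      using conv_le[OF l(1,2), of "u Bb" "3*r" "u B'"] uAb by (simp add: uB')
    ultimately show ?thesis using AB(6) r0 vA uB' by (simp add: conv_eq)
  qed
  have F3: "dist x0 z < 9*r/5 \<and> \<bar>v z\<bar> < r/2 \<and> (\<exists>a\<in>K2. dist z a \<le> tN)" if "z \<in> path_image P" for z
    using PS that Sm Pnear[OF that] ysK2 by blast
  have G1: "u z = 0 \<and> - r \<le> v z \<and> v z \<le> - r/2" if zs: "z \<in> closed_segment g0 q" for z
  proof -
    obtain l where l: "0 \<le> l" "l \<le> 1" "\<forall>w. (z - x0) \<bullet> w = (1 - l) * ((g0 - x0) \<bullet> w) + l * ((q - x0) \<bullet> w)"
      using seg_aff[OF zs] by blast
    have "u z = (1 - l) * u g0 + l * u q" "v z = (1 - l) * v g0 + l * v q" unfolding u_def v_def using l(3) by auto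
    thus ?thesis using conv_le[OF l(1,2), of "v g0" "-r/2" "v q"] conv_ge[OF l(1,2), of "-r" "v g0" "v q"] uvp r0 by simp
  qed
  have G3: "u z = 0 \<and> r/2 \<le> v z \<and> v z \<le> r" if zs: "z \<in> closed_segment p g1" for z
  proof -
    obtain l where l: "0 \<le> l" "l \<le> 1" "\<forall>w. (z - x0) \<bullet> w = (1 - l) * ((p - x0) \<bullet> w) + l * ((g1 - x0) \<bullet> w)"
      using seg_aff[OF zs] by blast
    have "u z = (1 - l) * u p + l * u g1" "v z = (1 - l) * v p + l * v g1" unfolding u_def v_def using l(3) by auto
    thus ?thesis using conv_le[OF l(1,2), of "v p" "r" "v g1"] conv_ge[OF l(1,2), of "r/2" "v p" "v g1"] uvp r0 by simp
  qed
  have G2: "\<bar>u z\<bar> < r \<and> \<bar>v z\<bar> < r \<and> (\<forall>y\<in>K2. \<delta> \<le> dist z y)" if "z \<in> path_image \<gamma>" for z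
  proof -
    have "dist x0 z < r" using gam(2) that by auto
    thus ?thesis using ub[of z] vb[of z] \<delta>(2) that by auto
  qed
  \<comment> \<open>apply Fashoda\<close>
  define Ph where "Ph = Phi x0 e n"
  have Ph1: "Ph z $ 1 = u z" "Ph z $ 2 = v z" for z unfolding Ph_def u_def v_def by (simp_all add: Phi_1 Phi_2)
  define a :: pt where "a = vector [- 3*r, - r]"
  define b :: pt where "b = vector [3*r, r]"
  have inbox: "Ph z \<in> cbox a b \<longleftrightarrow> - 3*r \<le> u z \<and> u z \<le> 3*r \<and> - r \<le> v z \<and> v z \<le> r" for z
    unfolding mem_box_cart forall_2 a_def b_def by (simp add: Ph1)
  have "path (Ph \<circ> f)" using fp by (intro path_continuous_image) (simp_all add: Ph_def Phi_cont)
  moreover have "path (Ph \<circ> g)" using gp by (intro path_continuous_image) (simp_all add: Ph_def Phi_cont)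
  moreover have "path_image (Ph \<circ> f) \<subseteq> cbox a b"
  proof -
    { fix z assume z: "z \<in> path_image f"
      have "- 3*r \<le> u z \<and> u z \<le> 3*r \<and> - r \<le> v z \<and> v z \<le> r"
      proof -
        { assume "z \<in> closed_segment A' Aa" hence ?thesis using F1 r0 by force }
        moreover
        { assume "z \<in> path_image P"
          hence "dist x0 z < 9*r/5" "\<bar>v z\<bar> < r/2" using F3 by auto
          hence ?thesis using ub[of z] r0 by (auto simp: abs_less_iff abs_le_iff) }
        moreover
        { assume "z \<in> closed_segment Bb B'" hence ?thesis using F2 r0 by force }
        ultimately show ?thesis using z fi by blast
      qed }
    thus ?thesis by (auto simp: path_image_compose inbox)
  qed
  moreover have "path_image (Ph \<circ> g) \<subseteq> cbox a b"
  proof -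
    { fix z assume z: "z \<in> path_image g"
      have "- 3*r \<le> u z \<and> u z \<le> 3*r \<and> - r \<le> v z \<and> v z \<le> r"
      proof -
        { assume "z \<in> closed_segment g0 q" hence ?thesis using G1 r0 by force }
        moreover
        { assume "z \<in> path_image \<gamma>" hence ?thesis using G2 r0 by (force simp: abs_less_iff) }
        moreover
        { assume "z \<in> closed_segment p g1" hence ?thesis using G3 r0 by force }
        ultimately show ?thesis using z gi by blast
      qed }
    thus ?thesis by (auto simp: path_image_compose inbox)
  qed
  moreover have "(pathstart (Ph \<circ> f))$1 = a$1" using fs uA' by (simp add: pathstart_compose Ph1 a_def)
  moreover have "(pathfinish (Ph \<circ> f))$1 = b$1" using fs uB' by (simp add: pathfinish_compose Ph1 b_def)
  moreover have "(pathstart (Ph \<circ> g))$2 = a$2" using gs uvp by (simp add: pathstart_compose Ph1 a_def)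
  moreover have "(pathfinish (Ph \<circ> g))$2 = b$2" using gs uvp by (simp add: pathfinish_compose Ph1 b_def)
  ultimately obtain w where w: "w \<in> path_image (Ph \<circ> f)" "w \<in> path_image (Ph \<circ> g)"
    by (rule fashoda)
  then obtain z1 z2 where z: "z1 \<in> path_image f" "z2 \<in> path_image g" "Ph z1 = Ph z2"
    by (auto simp: path_image_compose)
  have "z1 = z2" using Phi_inj[OF n1] z(3) unfolding Ph_def e_def by blast
  hence zf: "z1 \<in> path_image f" and zg: "z1 \<in> path_image g" using z by auto
  show False
  proof -
    { assume "z1 \<in> closed_segment A' Aa"
      hence "u z1 < - r" using F1 by auto
      moreover have "u z1 \<ge> - r" using zg gi G1 G2 G3 r0 by (force simp: abs_less_iff)
      ultimately have False by simp }
    moreover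
    { assume "z1 \<in> closed_segment Bb B'"
      hence "u z1 > r" using F2 by auto
      moreover have "u z1 \<le> r" using zg gi G1 G2 G3 r0 by (force simp: abs_less_iff)
      ultimately have False by simp }
    moreover
    { assume zP: "z1 \<in> path_image P"
      then obtain a0 where a0: "a0 \<in> K2" "dist z1 a0 \<le> tN" and vz: "\<bar>v z1\<bar> < r/2" using F3 by blast
      { assume "z1 \<in> path_image \<gamma>"
        hence "\<delta> \<le> dist z1 a0" using G2 a0 by blast
        hence False using a0 tN by simp }
      moreover
      { assume "z1 \<in> closed_segment g0 q" hence False using G1 vz by (force simp: abs_less_iff) }
      moreover
      { assume "z1 \<in> closed_segment p g1" hence False using G3 vz by (force simp: abs_less_iff) }
      ultimately have False using zg gi by blast }
    ultimately show False using zf fi by blast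
  qed
qed


theorem lemma4p14:
  fixes x0 :: pt and r0 \<epsilon>0 :: real and K :: "pt set"
  assumes "r0 > 0" and "0 < \<epsilon>0" and "\<epsilon>0 < 1/100"
    and "K \<subseteq> ball x0 r0" and "closedin (top_of_set (ball x0 r0)) K" and "x0 \<in> K"
    and "\<And>x r. x \<in> K \<inter> ball x0 (r0/2) \<Longrightarrow> 0 < r \<Longrightarrow> r \<le> r0/2 \<Longrightarrow> beta_bil K x r \<le> \<epsilon>0"
  shows "separates K x0 (r0/10)"
proof -
  define r where "r = r0/10"
  have r0': "r > 0" using assms(1) unfolding r_def by simp
  have r5: "r0/2 = 5*r" and r10: "r0 = 10*r" unfolding r_def by simp_all
  have flat: "beta_bil K x \<rho> < 1/100" if "x \<in> K" "x \<in> ball x0 (5*r)" "0 < \<rho>" "\<rho> \<le> 5*r" for x \<rho>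
    using assms(7)[of x \<rho>] assms(3) that r5 by fastforce
  obtain C where C: "closed C" "K = ball x0 r0 \<inter> C" using assms(5) closedin_closed by metis
  have betab: "beta K x0 r \<le> \<epsilon>0"
    using beta_le_bil[OF assms(6) r0'] assms(7)[of x0 r] assms(6) r0' r5 assms(1) by fastforce
  show ?thesis
    unfolding separates_def r_def[symmetric]
  proof (intro conjI allI impI)
    show "beta K x0 r \<le> 1/2" using betab assms(3) by linarith
    fix n assume nh: "norm n = 1 \<and> dev K x0 r (line_normal x0 n) / r = beta K x0 r"
    hence n1: "norm n = 1" and devb: "dev K x0 r (line_normal x0 n) = beta K x0 r * r"
      using r0' by (auto simp: field_simps)
    define \<beta> where "\<beta> = beta K x0 r"
    have br: "\<beta> * r < r/100" using betab assms(3) r0' unfolding \<beta>_def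
      by (metis mult_strict_right_mono order_le_less_trans times_divide_eq_left mult_1)
    have vK0: "\<bar>(y - x0) \<bullet> n\<bar> \<le> \<beta> * r" if "y \<in> K \<inter> ball x0 r" for y
      using uni_bound[OF n1 that] devb unfolding \<beta>_def by simp
    have vK: "\<forall>y\<in>K \<inter> ball x0 r. \<bar>(y - x0) \<bullet> n\<bar> < r/100" using vK0 br by fastforce
    define U where "U = ball x0 r - K"
    define p where "p = x0 + (r/2) *\<^sub>R n"
    define q where "q = x0 - (r/2) *\<^sub>R n"
    have nn: "n \<bullet> n = 1" using n1 by (simp add: norm_eq_1)
    have Dpe: "Dplus x0 r n (\<beta> * r) = ball x0 r \<inter> {z. n \<bullet> z > \<beta> * r + n \<bullet> x0}"
      by (auto simp: Dplus_def inner_diff_left inner_diff_right inner_commute)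
    have Dme: "Dminus x0 r n (\<beta> * r) = ball x0 r \<inter> {z. n \<bullet> z < n \<bullet> x0 - \<beta> * r}"
      by (auto simp: Dminus_def inner_diff_left inner_diff_right inner_commute)
    have Dpc: "connected (Dplus x0 r n (\<beta> * r))" unfolding Dpe
      by (intro convex_connected convex_Int convex_ball convex_halfspace_gt)
    have Dmc: "connected (Dminus x0 r n (\<beta> * r))" unfolding Dme
      by (intro convex_connected convex_Int convex_ball convex_halfspace_lt)
    have DpU: "Dplus x0 r n (\<beta> * r) \<subseteq> U"
    proof
      fix z assume z: "z \<in> Dplus x0 r n (\<beta> * r)"
      hence zb: "z \<in> ball x0 r" "(z - x0) \<bullet> n > \<beta> * r" by (auto simp: Dplus_def)
      have "z \<notin> K" using vK0[of z] zb by auto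
      thus "z \<in> U" using zb unfolding U_def by simp
    qed
    have DmU: "Dminus x0 r n (\<beta> * r) \<subseteq> U"
    proof
      fix z assume z: "z \<in> Dminus x0 r n (\<beta> * r)"
      hence zb: "z \<in> ball x0 r" "- ((z - x0) \<bullet> n) > \<beta> * r" by (auto simp: Dminus_def)
      have "z \<notin> K" using vK0[of z] zb by auto
      thus "z \<in> U" using zb unfolding U_def by simp
    qed
    have pD: "p \<in> Dplus x0 r n (\<beta> * r)" unfolding Dplus_def p_def using r0' br nn n1
      by (simp add: dist_norm)
    have qD: "q \<in> Dminus x0 r n (\<beta> * r)" unfolding Dminus_def q_def using r0' br nn n1
      by (simp add: dist_norm)
    have Up: "Dplus x0 r n (\<beta> * r) \<subseteq> connected_component_set U p"
      by (rule connected_component_maximal[OF pD Dpc DpU])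
    have Uq: "Dminus x0 r n (\<beta> * r) \<subseteq> connected_component_set U q"
      by (rule connected_component_maximal[OF qD Dmc DmU])
    have Uo: "open U"
    proof -
      have "U = ball x0 r \<inter> - C" unfolding U_def using C(2) r10 r0' by auto
      thus ?thesis using C(1) by (simp add: open_Int open_Compl)
    qed
    have neq: "connected_component_set U p \<noteq> connected_component_set U q"
    proof
      assume eq: "connected_component_set U p = connected_component_set U q"
      have "q \<in> U" using qD DmU by auto
      hence "q \<in> connected_component_set U p" using eq by simp
      hence "path_component U p q" using open_path_connected_component[OF Uo] by simp
      then obtain \<gamma> where gam: "path \<gamma>" "path_image \<gamma> \<subseteq> U" "pathstart \<gamma> = p" "pathfinish \<gamma> = q"
        unfolding path_component_def by blast
      have C2': "K = ball x0 (10*r) \<inter> C" using C(2) r10 by simp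
      have g2: "path_image \<gamma> \<subseteq> ball x0 r - K" using gam(2) unfolding U_def .
      show False using no_path[OF flat r0' n1 C(1) C2' assms(6) vK gam(1) g2] gam(3,4)
        unfolding p_def q_def by blast
    qed
    show "\<exists>p q. Dplus x0 r n (beta K x0 r * r) \<subseteq> connected_component_set (ball x0 r - K) p \<and>
               Dminus x0 r n (beta K x0 r * r) \<subseteq> connected_component_set (ball x0 r - K) q \<and>
               connected_component_set (ball x0 r - K) p \<noteq> connected_component_set (ball x0 r - K) q"
      using Up Uq neq unfolding U_def \<beta>_def by blast
  qed
qed

end
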